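(* In the online tolling setting described in the context, let $\bm{\pi}$ be the algorithm that sets $\boldsymbol{\tau}^{(1)}=\bm{0}$ and, after observing the equilibrium edge flows $\bm{x}^t$ under $\boldsymbol{\tau}^{(t)}$, updates $\boldsymbol{\tau}^{(t+1)}=(\boldsymbol{\tau}^{(t)}-\gamma(\bm{c}-\bm{x}^t))_+$ (componentwise positive part) with step size $\gamma>0$. Then $$R_T(\bm{\pi})\le\gamma T\,\frac{|E|\,(\max_{e\in E}c_e+|\mathcal{U}|)^2}{2}.$$
   Context: Network: directed graph $G=(V,E)$, edge capacities $\bm{c}=\{c_e\}$ with $c_e\ge0$, fixed edge travel times $l_e$, $l_P=\sum_{e\in P}l_e$. Finite user set $\mathcal{U}$; user $u$ has fixed outside-option cost $\lambda_u$. In each period $t=1,\dots,T$, O-D pairs $w^t_u$ and values of time $v^t_u\ge0$ are drawn i.i.d. across periods from a distribution $\mathcal{D}$; $\mathcal{P}^t_u$ is the finite set of paths for $w^t_u$. Given tolls $\boldsymbol{\tau}^{(t)}$, the period-$t$ equilibrium assigns each user to a path $P\in\mathcal{P}^t_u$ or the outside option so as to minimize cost ($v^t_ul_P+\sum_{e\in P}\tau^{(t)}_e$ for a path, $\lambda_u$ for the outside option; capacities need not be respected), encoded by binary $f^t_{P,u},f^t_{o,u}$, with edge flows $x^t_e=\sum_u\sum_{P\in\mathcal{P}^t_u:e\in P}f^t_{P,u}$. Let $U_t=\sum_u(v^t_u\sum_Pl_Pf^t_{P,u}+\lambda_uf^t_{o,u})$ and $U^*_t$ be the minimum of this objective over binary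 assignments (each user exactly one path or the outside option) satisfying $\sum_u\sum_{P\ni e}f_{P,u}\le c_e$ for all $e$. Regret: $R_T(\bm{\pi})=\mathbb{E}[\sum_{t=1}^T(U_t-U^*_t)]$, expectation over $\mathcal{D}$. *)

theory Defs
  imports "HOL-Probability.Probability"
begin

text \<open>A path is represented by its
  set of edges (the paper only uses paths through l_P = sum of l_e over e in P and
  through the incidence relation e in P). A per-period scenario assigns to every
  user u its O-D pair and its value of time. An assignment gives every user either
  a path (Some P) or the outside option (None); this is exactly the binary encoding
  f_{P,u}, f_{o,u} with "each user exactly one path or the outside option".\<close>

type_synonym 'v edge = "'v \<times> 'v"
type_synonym ('u, 'v) scenario = "'u \<Rightarrow> ('v \<times> 'v) \<times> real"
type_synonym ('u, 'v) assignment = "'u \<Rightarrow> 'v edge set option"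

definition path_len :: "('v edge \<Rightarrow> real) \<Rightarrow> 'v edge set \<Rightarrow> real" where
  "path_len l P = (\<Sum>e\<in>P. l e)"

definition admissible ::
  "('v \<times> 'v \<Rightarrow> 'v edge set set) \<Rightarrow> ('u, 'v) scenario \<Rightarrow> 'u \<Rightarrow> 'v edge set option \<Rightarrow> bool" where
  "admissible Paths s u opt = (case opt of None \<Rightarrow> True | Some P \<Rightarrow> P \<in> Paths (fst (s u)))"

definition feasible_assignment ::
  "('v \<times> 'v \<Rightarrow> 'v edge set set) \<Rightarrow> ('u, 'v) scenario \<Rightarrow> ('u, 'v) assignment \<Rightarrow> bool" where
  "feasible_assignment Paths s a = (\<forall>u. admissible Paths s u (a u))"

definition flow :: "('u::finite, 'v) assignment \<Rightarrow> 'v edge \<Rightarrow> real" where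
  "flow a e = real (card {u. \<exists>P. a u = Some P \<and> e \<in> P})"

definition user_cost ::
  "('v edge \<Rightarrow> real) \<Rightarrow> ('u \<Rightarrow> real) \<Rightarrow> ('v edge \<Rightarrow> real) \<Rightarrow> ('u, 'v) scenario \<Rightarrow> 'u
     \<Rightarrow> 'v edge set option \<Rightarrow> real" where
  "user_cost l lam tau s u opt = (case opt of None \<Rightarrow> lam u
      | Some P \<Rightarrow> snd (s u) * path_len l P + (\<Sum>e\<in>P. tau e))"

definition is_equilibrium ::
  "('v \<times> 'v \<Rightarrow> 'v edge set set) \<Rightarrow> ('v edge \<Rightarrow> real) \<Rightarrow> ('u \<Rightarrow> real) \<Rightarrow> ('v edge \<Rightarrow> real)
     \<Rightarrow> ('u, 'v) scenario \<Rightarrow> ('u, 'v) assignment \<Rightarrow> bool" where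
  "is_equilibrium Paths l lam tau s a =
     (feasible_assignment Paths s a \<and>
      (\<forall>u opt. admissible Paths s u opt \<longrightarrow> user_cost l lam tau s u (a u) \<le> user_cost l lam tau s u opt))"

definition social_cost ::
  "('v edge \<Rightarrow> real) \<Rightarrow> ('u::finite \<Rightarrow> real) \<Rightarrow> ('u, 'v) scenario \<Rightarrow> ('u, 'v) assignment \<Rightarrow> real" where
  "social_cost l lam s a = (\<Sum>u\<in>UNIV. case a u of None \<Rightarrow> lam u
      | Some P \<Rightarrow> snd (s u) * path_len l P)"

definition opt_cost ::
  "('v \<times> 'v \<Rightarrow> 'v edge set set) \<Rightarrow> 'v edge set \<Rightarrow> ('v edge \<Rightarrow> real) \<Rightarrow> ('v edge \<Rightarrow> real)
     \<Rightarrow> ('u::finite \<Rightarrow> real) \<Rightarrow> ('u, 'v) scenario \<Rightarrow> real" where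
  "opt_cost Paths E c l lam s =
     Min (social_cost l lam s ` {a. feasible_assignment Paths s a \<and> (\<forall>e\<in>E. flow a e \<le> c e)})"

text \<open>Tolls of the algorithm along a realized scenario sequence omega (periods indexed
  from 0: tolls ... 0 is tau^(1)). sel t tau s is the equilibrium observed in period t.\<close>
primrec tolls ::
  "(nat \<Rightarrow> ('v edge \<Rightarrow> real) \<Rightarrow> ('u::finite, 'v) scenario \<Rightarrow> ('u, 'v) assignment)
     \<Rightarrow> 'v edge set \<Rightarrow> ('v edge \<Rightarrow> real) \<Rightarrow> real \<Rightarrow> (nat \<Rightarrow> ('u, 'v) scenario) \<Rightarrow> nat
     \<Rightarrow> 'v edge \<Rightarrow> real" where
  "tolls sel E c \<gamma> \<omega> 0 = (\<lambda>e. 0)"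
| "tolls sel E c \<gamma> \<omega> (Suc t) =
     (\<lambda>e. if e \<in> E then max 0 (tolls sel E c \<gamma> \<omega> t e
              - \<gamma> * (c e - flow (sel t (tolls sel E c \<gamma> \<omega> t) (\<omega> t)) e)) else 0)"

definition regret ::
  "('u::finite, 'v) scenario measure \<Rightarrow> nat
     \<Rightarrow> (nat \<Rightarrow> ('v edge \<Rightarrow> real) \<Rightarrow> ('u, 'v) scenario \<Rightarrow> ('u, 'v) assignment)
     \<Rightarrow> ('v \<times> 'v \<Rightarrow> 'v edge set set) \<Rightarrow> 'v edge set \<Rightarrow> ('v edge \<Rightarrow> real) \<Rightarrow> ('v edge \<Rightarrow> real)
     \<Rightarrow> ('u \<Rightarrow> real) \<Rightarrow> real \<Rightarrow> real" where
  "regret D T sel Paths E c l lam \<gamma> =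
     (\<integral>\<omega>. (\<Sum>t<T. social_cost l lam (\<omega> t) (sel t (tolls sel E c \<gamma> \<omega> t) (\<omega> t))
                  - opt_cost Paths E c l lam (\<omega> t)) \<partial>(PiM {..<T} (\<lambda>_. D)))"

end

theory Submission
  imports Defs
begin

lemma tolls_nonneg: "tolls sel E c \<gamma> \<omega> t e \<ge> 0"
  by (induction t arbitrary: e) auto

lemma toll_identity:
  fixes a :: "('u::finite, 'v) assignment"
  assumes fin: "finite E" and PE: "\<forall>w. \<forall>P\<in>Paths w. P \<subseteq> E"
    and fa: "feasible_assignment Paths s a"
  shows "(\<Sum>u\<in>UNIV. case a u of None \<Rightarrow> 0 | Some P \<Rightarrow> (\<Sum>e\<in>P. tau e))
         = (\<Sum>e\<in>E. tau e * flow a e)"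
proof -
  have "(\<Sum>e\<in>E. tau e * flow a e)
      = (\<Sum>e\<in>E. \<Sum>u\<in>UNIV. if (\<exists>P. a u = Some P \<and> e \<in> P) then tau e else 0)"
  proof (rule sum.cong[OF refl])
    fix e
    have "(\<Sum>u\<in>UNIV. if (\<exists>P. a u = Some P \<and> e \<in> P) then tau e else 0)
        = (\<Sum>u\<in>{u\<in>UNIV. \<exists>P. a u = Some P \<and> e \<in> P}. tau e)"
      by (rule sum.inter_filter[symmetric]) simp
    also have "\<dots> = tau e * flow a e" by (simp add: flow_def)
    finally show "tau e * flow a e = (\<Sum>u\<in>UNIV. if (\<exists>P. a u = Some P \<and> e \<in> P) then tau e else 0)"
      by simp
  qed
  also have "\<dots> = (\<Sum>u\<in>UNIV. \<Sum>e\<in>E. if (\<exists>P. a u = Some P \<and> e \<in> P) then tau e else 0)"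
    by (rule sum.swap)
  also have "\<dots> = (\<Sum>u\<in>UNIV. case a u of None \<Rightarrow> 0 | Some P \<Rightarrow> (\<Sum>e\<in>P. tau e))"
  proof (rule sum.cong[OF refl])
    fix u
    show "(\<Sum>e\<in>E. if (\<exists>P. a u = Some P \<and> e \<in> P) then tau e else 0)
        = (case a u of None \<Rightarrow> 0 | Some P \<Rightarrow> (\<Sum>e\<in>P. tau e))"
    proof (cases "a u")
      case None then show ?thesis by simp
    next
      case (Some P)
      then have "P \<in> Paths (fst (s u))" using fa
        by (auto simp: feasible_assignment_def admissible_def split: option.splits)
      then have "P \<subseteq> E" using PE by blast
      then have "(\<Sum>e\<in>E. if e \<in> P then tau e else 0) = (\<Sum>e\<in>E \<inter> P. tau e)"
        using fin by (simp add: sum.inter_restrict)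
      also have "E \<inter> P = P" using \<open>P \<subseteq> E\<close> by blast
      finally show ?thesis using Some by simp
    qed
  qed
  finally show ?thesis by simp
qed

lemma cost_split:
  fixes a :: "('u::finite, 'v) assignment"
  assumes fin: "finite E" and PE: "\<forall>w. \<forall>P\<in>Paths w. P \<subseteq> E"
    and fa: "feasible_assignment Paths s a"
  shows "(\<Sum>u\<in>UNIV. user_cost l lam tau s u (a u))
         = social_cost l lam s a + (\<Sum>e\<in>E. tau e * flow a e)"
proof -
  have "(\<Sum>u\<in>UNIV. user_cost l lam tau s u (a u))
     = (\<Sum>u\<in>UNIV. (case a u of None \<Rightarrow> lam u | Some P \<Rightarrow> snd (s u) * path_len l P)
          + (case a u of None \<Rightarrow> 0 | Some P \<Rightarrow> (\<Sum>e\<in>P. tau e)))"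
    by (rule sum.cong) (auto simp: user_cost_def split: option.splits)
  also have "\<dots> = social_cost l lam s a
       + (\<Sum>u\<in>UNIV. case a u of None \<Rightarrow> 0 | Some P \<Rightarrow> (\<Sum>e\<in>P. tau e))"
    by (simp add: sum.distrib social_cost_def)
  finally show ?thesis using toll_identity[OF fin PE fa] by simp
qed

lemma feas_mem:
  assumes "feasible_assignment Paths s a"
  shows "a u \<in> insert None (Some ` Paths (fst (s u)))"
proof -
  have "admissible Paths s u (a u)" using assms by (simp add: feasible_assignment_def)
  then show ?thesis by (cases "a u") (auto simp: admissible_def)
qed

lemma feasible_finite:
  fixes s :: "('u::finite, 'v) scenario"
  assumes "\<forall>w. finite (Paths w)"
  shows "finite {a. feasible_assignment Paths s a}"
proof -
  have "{a. feasible_assignment Paths s a} \<subseteq>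
        {a. \<forall>u. a u \<in> insert None (Some ` Paths (fst (s u)))}"
    using feas_mem[of Paths s] by blast
  moreover have "finite {a. \<forall>u. a u \<in> insert None (Some ` Paths (fst (s u)))}"
  proof -
    have "{a. \<forall>u. a u \<in> insert None (Some ` Paths (fst (s u)))}
       = Pi UNIV (\<lambda>u. insert None (Some ` Paths (fst (s u))))" by (auto simp: Pi_def)
    also have "\<dots> = PiE UNIV (\<lambda>u. insert None (Some ` Paths (fst (s u))))"
      by (simp add: PiE_UNIV_domain)
    moreover have "finite (PiE UNIV (\<lambda>u. insert None (Some ` Paths (fst (s u)))))"
      using assms[rule_format, of "fst (s _)"] by (intro finite_PiE) simp_all
    ultimately show ?thesis by simp
  qed
  ultimately show ?thesis by (rule finite_subset)
qed

lemma period_bound: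
  fixes a :: "('u::finite, 'v) assignment"
  assumes fin: "finite E" and PE: "\<forall>w. \<forall>P\<in>Paths w. P \<subseteq> E"
    and finP: "\<forall>w. finite (Paths w)"
    and cpos: "\<forall>e\<in>E. c e \<ge> 0"
    and tpos: "\<forall>e. tau e \<ge> 0"
    and eq: "is_equilibrium Paths l lam tau s a"
  shows "social_cost l lam s a - opt_cost Paths E c l lam s \<le> (\<Sum>e\<in>E. tau e * (c e - flow a e))"
proof -
  let ?F = "{a. feasible_assignment Paths s a \<and> (\<forall>e\<in>E. flow a e \<le> c e)}"
  have "?F \<subseteq> {a. feasible_assignment Paths s a}" by blast
  then have finF: "finite ?F" using feasible_finite[OF finP, of s] finite_subset by blast
  have "(\<lambda>u. None) \<in> ?F" using cpos
    by (auto simp: feasible_assignment_def admissible_def flow_def)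
  then have ne: "social_cost l lam s ` ?F \<noteq> {}" by blast
  have "opt_cost Paths E c l lam s \<in> social_cost l lam s ` ?F"
    unfolding opt_cost_def using finF ne by (intro Min_in) auto
  then obtain b where bF: "b \<in> ?F" and ob: "opt_cost Paths E c l lam s = social_cost l lam s b"
    by auto
  have fa: "feasible_assignment Paths s a" using eq by (simp add: is_equilibrium_def)
  have fb: "feasible_assignment Paths s b" using bF by simp
  have "(\<Sum>u\<in>UNIV. user_cost l lam tau s u (a u)) \<le> (\<Sum>u\<in>UNIV. user_cost l lam tau s u (b u))"
    using eq fb by (intro sum_mono) (auto simp: is_equilibrium_def feasible_assignment_def)
  then have 1: "social_cost l lam s a + (\<Sum>e\<in>E. tau e * flow a e)
      \<le> social_cost l lam s b + (\<Sum>e\<in>E. tau e * flow b e)"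
    using cost_split[OF fin PE fa] cost_split[OF fin PE fb] by simp
  have 2: "(\<Sum>e\<in>E. tau e * flow b e) \<le> (\<Sum>e\<in>E. tau e * c e)"
    using bF tpos by (intro sum_mono mult_left_mono) auto
  have 3: "(\<Sum>e\<in>E. tau e * (c e - flow a e)) = (\<Sum>e\<in>E. tau e * c e) - (\<Sum>e\<in>E. tau e * flow a e)"
    by (simp add: right_diff_distrib sum_subtractf)
  show ?thesis using 1 2 3 ob by linarith
qed

lemma flow_bounds: "0 \<le> flow (a::('u::finite, 'v) assignment) e \<and> flow a e \<le> real CARD('u)"
  unfolding flow_def by (simp add: card_mono)

lemma pointwise_bound:
  fixes E :: "'v edge set"
    and c l :: "'v edge \<Rightarrow> real"
    and Paths :: "'v \<times> 'v \<Rightarrow> 'v edge set set"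
    and lam :: "'u::finite \<Rightarrow> real"
    and sel :: "nat \<Rightarrow> ('v edge \<Rightarrow> real) \<Rightarrow> ('u, 'v) scenario \<Rightarrow> ('u, 'v) assignment"
    and \<gamma> :: real and T :: nat and \<omega> :: "nat \<Rightarrow> ('u, 'v) scenario"
  assumes fin: "finite E"
    and cpos: "\<forall>e\<in>E. c e \<ge> 0"
    and finP: "\<forall>w. finite (Paths w)"
    and PE: "\<forall>w. \<forall>P\<in>Paths w. P \<subseteq> E"
    and eq: "\<forall>t tau s. is_equilibrium Paths l lam tau s (sel t tau s)"
    and gpos: "\<gamma> > 0"
  shows "(\<Sum>t<T. social_cost l lam (\<omega> t) (sel t (tolls sel E c \<gamma> \<omega> t) (\<omega> t))
                  - opt_cost Paths E c l lam (\<omega> t))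
           \<le> \<gamma> * T * (card E * (Max (c ` E) + CARD('u)) ^ 2) / 2"
proof -
  define tau where "tau t = tolls sel E c \<gamma> \<omega> t" for t
  define g where "g t e = c e - flow (sel t (tau t) (\<omega> t)) e" for t e
  define N where "N t = (\<Sum>e\<in>E. (tau t e)^2)" for t
  define K where "K = Max (c ` E) + real CARD('u)"
  have tp: "tau t e \<ge> 0" for t e unfolding tau_def by (rule tolls_nonneg)
  have step: "tau (Suc t) e = max 0 (tau t e - \<gamma> * g t e)" if "e \<in> E" for t e
    using that unfolding tau_def g_def by simp
  have P1: "social_cost l lam (\<omega> t) (sel t (tau t) (\<omega> t)) - opt_cost Paths E c l lam (\<omega> t)
        \<le> (\<Sum>e\<in>E. tau t e * g t e)" for t
    unfolding g_def using period_bound[OF fin PE finP cpos _ eq[rule_format]] tp by blast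
  have P2: "2 * \<gamma> * (\<Sum>e\<in>E. tau t e * g t e) \<le> N t - N (Suc t) + \<gamma>^2 * (\<Sum>e\<in>E. (g t e)^2)" for t
  proof -
    have "2 * \<gamma> * (tau t e * g t e) \<le> (tau t e)^2 - (tau (Suc t) e)^2 + \<gamma>^2 * (g t e)^2"
      if "e \<in> E" for e
    proof -
      have "(tau (Suc t) e)^2 \<le> (tau t e - \<gamma> * g t e)^2"
        unfolding step[OF that] by (cases "0 \<le> tau t e - \<gamma> * g t e") (auto simp: max_def)
      then show ?thesis by (simp add: power2_eq_square algebra_simps)
    qed
    then have "(\<Sum>e\<in>E. 2 * \<gamma> * (tau t e * g t e))
        \<le> (\<Sum>e\<in>E. (tau t e)^2 - (tau (Suc t) e)^2 + \<gamma>^2 * (g t e)^2)"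
      by (rule sum_mono)
    then show ?thesis
      by (simp add: N_def sum.distrib sum_subtractf sum_distrib_left)
  qed
  have gb: "(g t e)^2 \<le> K^2" if "e \<in> E" for t e
  proof -
    have "c e \<le> Max (c ` E)" using fin that by simp
    moreover have "0 \<le> c e" using cpos that by simp
    moreover note flow_bounds[of "sel t (tau t) (\<omega> t)" e]
    ultimately have "\<bar>g t e\<bar> \<le> K" unfolding g_def K_def by linarith
    then have "\<bar>g t e\<bar>^2 \<le> K^2" by (intro power_mono) simp_all
    then show ?thesis by simp
  qed
  have G: "(\<Sum>e\<in>E. (g t e)^2) \<le> card E * K^2" for t
    using sum_mono[of E "\<lambda>e. (g t e)^2" "\<lambda>e. K^2"] gb by simp
  have N0: "N 0 = 0" unfolding N_def tau_def by simp
  have NT: "N T \<ge> 0" unfolding N_def by (simp add: sum_nonneg)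
  have tele: "(\<Sum>t<T. N t - N (Suc t)) = N 0 - N T"
    by (induction T) auto
  have "2 * \<gamma> * (\<Sum>t<T. \<Sum>e\<in>E. tau t e * g t e)
      = (\<Sum>t<T. 2 * \<gamma> * (\<Sum>e\<in>E. tau t e * g t e))" by (simp add: sum_distrib_left)
  also have "\<dots> \<le> (\<Sum>t<T. N t - N (Suc t) + \<gamma>^2 * (\<Sum>e\<in>E. (g t e)^2))"
    by (rule sum_mono) (rule P2)
  also have "\<dots> = (N 0 - N T) + (\<Sum>t<T. \<gamma>^2 * (\<Sum>e\<in>E. (g t e)^2))"
    by (simp add: sum.distrib tele)
  also have "\<dots> \<le> (\<Sum>t<T. \<gamma>^2 * (card E * K^2))"
  proof -
    have "(\<Sum>t<T. \<gamma>^2 * (\<Sum>e\<in>E. (g t e)^2)) \<le> (\<Sum>t<T. \<gamma>^2 * (card E * K^2))"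
      by (intro sum_mono mult_left_mono G) simp
    then show ?thesis using N0 NT by linarith
  qed
  also have "\<dots> = T * \<gamma>^2 * (card E * K^2)" by simp
  finally have A: "2 * \<gamma> * (\<Sum>t<T. \<Sum>e\<in>E. tau t e * g t e) \<le> T * \<gamma>^2 * (card E * K^2)" .
  have B: "(\<Sum>t<T. \<Sum>e\<in>E. tau t e * g t e) \<le> \<gamma> * T * (card E * K^2) / 2"
  proof -
    have "2 * \<gamma> * (\<Sum>t<T. \<Sum>e\<in>E. tau t e * g t e) \<le> 2 * \<gamma> * (\<gamma> * T * (card E * K^2) / 2)"
      using A by (simp add: power2_eq_square algebra_simps)
    then show ?thesis using gpos by simp
  qed
  have "(\<Sum>t<T. social_cost l lam (\<omega> t) (sel t (tau t) (\<omega> t)) - opt_cost Paths E c l lam (\<omega> t))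
      \<le> (\<Sum>t<T. \<Sum>e\<in>E. tau t e * g t e)" by (rule sum_mono) (rule P1)
  with B show ?thesis unfolding tau_def K_def by simp
qed

theorem lemma2:
  fixes E :: "'v edge set"
    and c l :: "'v edge \<Rightarrow> real"
    and Paths :: "'v \<times> 'v \<Rightarrow> 'v edge set set"
    and lam :: "'u::finite \<Rightarrow> real"
    and D :: "('u, 'v) scenario measure"
    and sel :: "nat \<Rightarrow> ('v edge \<Rightarrow> real) \<Rightarrow> ('u, 'v) scenario \<Rightarrow> ('u, 'v) assignment"
    and \<gamma> :: real and T :: nat
  assumes "finite E"
    and "\<forall>e\<in>E. c e \<ge> 0"
    and "\<forall>w. finite (Paths w)"
    and "\<forall>w. \<forall>P\<in>Paths w. P \<subseteq> E"
    and "prob_space D"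
    and "AE s in D. \<forall>u. snd (s u) \<ge> 0"
    and "\<forall>t tau s. is_equilibrium Paths l lam tau s (sel t tau s)"
    and "\<gamma> > 0"
  shows "regret D T sel Paths E c l lam \<gamma>
           \<le> \<gamma> * T * (card E * (Max (c ` E) + CARD('u)) ^ 2) / 2"
proof -
  let ?M = "PiM {..<T} (\<lambda>_. D)"
  let ?K = "\<gamma> * T * (card E * (Max (c ` E) + CARD('u)) ^ 2) / 2"
  let ?f = "\<lambda>\<omega>. (\<Sum>t<T. social_cost l lam (\<omega> t) (sel t (tolls sel E c \<gamma> \<omega> t) (\<omega> t))
                  - opt_cost Paths E c l lam (\<omega> t))"
  interpret P: prob_space ?M
    using assms(5) by (intro prob_space_PiM) auto
  have fb: "?f \<omega> \<le> ?K" for \<omega>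
    using pointwise_bound[OF assms(1-4) assms(7-8)] by blast
  have K0: "?K \<ge> 0" using assms(8) by simp
  show ?thesis
  proof (cases "integrable ?M ?f")
    case True
    have "integral\<^sup>L ?M ?f \<le> integral\<^sup>L ?M (\<lambda>_. ?K)"
      apply (rule integral_mono[OF True])
      apply simp
      apply (rule fb)
      done
    then show ?thesis by (simp add: regret_def P.prob_space)
  next
    case False
    then show ?thesis using K0 by (simp add: regret_def not_integrable_integral_eq)
  qed
qed

end
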